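(* Let $A,B,C\in\mathrm{Sym}(\mathbb C^{2d})$. If $A\#B$, $B\#C$, $(A\#B)\#C$ and $A\#(B\#C)$ are all well defined, then $(A\#B)\#C=A\#(B\#C)$. Moreover, for all $A,B\in\mathrm{Sym}(\mathbb C^{2d})$ (whenever the products are well defined): $A\#0=0\#A=A$, $A\#(-A)=0$, $\overline{A\#B}=\bar B\#\bar A$, and $(-A)\#(-B)=-(B\#A)$.
   Context: Let $d\ge 1$, let $\mathbb 1$ denote an identity matrix, and let $\theta=\begin{bmatrix}0&-i\mathbb 1_d\\ i\mathbb 1_d&0\end{bmatrix}$ ($2d\times 2d$). $\mathrm{Sym}(\mathbb C^{n})$ denotes the set of complex symmetric $n\times n$ matrices; $\bar A$ is the entrywise complex conjugate. For $A,B\in\mathrm{Sym}(\mathbb C^{2d})$ such that $M=\begin{bmatrix}\theta A\theta&-\theta\\ \theta&\theta B\theta\end{bmatrix}$ is invertible, one defines $A\#B:=J^TM^{-1}J\in\mathrm{Sym}(\mathbb C^{2d})$, where $J=\begin{bmatrix}-\mathbb 1_{2d}\\ \mathbb 1_{2d}\end{bmatrix}$; $A\#B$ is called well defined when $M$ is invertible. *)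

theory Defs
  imports Complex_Main "Jordan_Normal_Form.Matrix" "Jordan_Normal_Form.Gauss_Jordan_Elimination"
begin

definition sym_mat :: "nat \<Rightarrow> complex mat \<Rightarrow> bool" where
  "sym_mat d A \<longleftrightarrow> A \<in> carrier_mat (2*d) (2*d) \<and> transpose_mat A = A"

definition theta :: "nat \<Rightarrow> complex mat" where
  "theta d = four_block_mat (0\<^sub>m d d) ((- \<i>) \<cdot>\<^sub>m 1\<^sub>m d) (\<i> \<cdot>\<^sub>m 1\<^sub>m d) (0\<^sub>m d d)"

definition Mblock :: "nat \<Rightarrow> complex mat \<Rightarrow> complex mat \<Rightarrow> complex mat" where
  "Mblock d A B = four_block_mat (theta d * A * theta d) (- theta d) (theta d) (theta d * B * theta d)"

definition Jmat :: "nat \<Rightarrow> complex mat" where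
  "Jmat d = (- 1\<^sub>m (2*d)) @\<^sub>r 1\<^sub>m (2*d)"

definition sharp_wd :: "nat \<Rightarrow> complex mat \<Rightarrow> complex mat \<Rightarrow> bool" where
  "sharp_wd d A B \<longleftrightarrow> invertible_mat (Mblock d A B)"

definition sharp :: "nat \<Rightarrow> complex mat \<Rightarrow> complex mat \<Rightarrow> complex mat" where
  "sharp d A B = transpose_mat (Jmat d) * the (mat_inverse (Mblock d A B)) * Jmat d"

definition conj_mat :: "complex mat \<Rightarrow> complex mat" where
  "conj_mat A = map_mat cnj A"

end

theory Submission
  imports Defs
begin


lemma theta_carrier[simp]: "theta d \<in> carrier_mat (2*d) (2*d)"
  unfolding theta_def by (metis four_block_carrier_mat mult_2 one_carrier_mat smult_carrier_mat zero_carrier_mat)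

lemma theta_dims[simp]: "dim_row (theta d) = 2*d" "dim_col (theta d) = 2*d"
  by (metis carrier_matD theta_carrier)+

lemma theta_sq: "theta d * theta d = 1\<^sub>m (2*d)"
proof -
  have "theta d * theta d = four_block_mat (0\<^sub>m d d * 0\<^sub>m d d + ((- \<i>) \<cdot>\<^sub>m 1\<^sub>m d) * (\<i> \<cdot>\<^sub>m 1\<^sub>m d))
     (0\<^sub>m d d * ((- \<i>) \<cdot>\<^sub>m 1\<^sub>m d) + ((- \<i>) \<cdot>\<^sub>m 1\<^sub>m d) * 0\<^sub>m d d)
     ((\<i> \<cdot>\<^sub>m 1\<^sub>m d) * 0\<^sub>m d d + 0\<^sub>m d d * (\<i> \<cdot>\<^sub>m 1\<^sub>m d))
     ((\<i> \<cdot>\<^sub>m 1\<^sub>m d) * ((- \<i>) \<cdot>\<^sub>m 1\<^sub>m d) + 0\<^sub>m d d * 0\<^sub>m d d)"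
    unfolding theta_def by (rule mult_four_block_mat) auto
  also have "\<dots> = four_block_mat (1\<^sub>m d) (0\<^sub>m d d) (0\<^sub>m d d) (1\<^sub>m d)"
    by (intro arg_cong4[where f=four_block_mat]; rule eq_matI; auto)
  finally show ?thesis by (simp add: mult_2)
qed

lemma TAT_carrier[simp]: "A \<in> carrier_mat (2*d) (2*d) \<Longrightarrow> theta d * A * theta d \<in> carrier_mat (2*d) (2*d)"
  by (metis mult_carrier_mat theta_carrier)

lemma TTv[simp]: "w \<in> carrier_vec (2*d) \<Longrightarrow> theta d *\<^sub>v (theta d *\<^sub>v w) = w"
  by (metis assoc_mult_mat_vec one_mult_mat_vec theta_carrier theta_sq)

lemma Mblock_carrier[simp]: "A \<in> carrier_mat (2*d) (2*d) \<Longrightarrow> B \<in> carrier_mat (2*d) (2*d) \<Longrightarrow>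
  Mblock d A B \<in> carrier_mat (2*d+2*d) (2*d+2*d)"
  unfolding Mblock_def by (rule four_block_carrier_mat) (auto simp del: mult_2 mult_2_right)

lemma Mblock_mult: assumes A: "A \<in> carrier_mat (2*d) (2*d)" and B: "B \<in> carrier_mat (2*d) (2*d)"
  and p: "p \<in> carrier_vec (2*d)" and q: "q \<in> carrier_vec (2*d)"
  shows "Mblock d A B *\<^sub>v (p @\<^sub>v q) =
    (theta d *\<^sub>v (A *\<^sub>v (theta d *\<^sub>v p)) - theta d *\<^sub>v q) @\<^sub>v (theta d *\<^sub>v p + theta d *\<^sub>v (B *\<^sub>v (theta d *\<^sub>v q)))"
proof -
  let ?T = "theta d"
  have "Mblock d A B *\<^sub>v (p @\<^sub>v q) = (?T*A*?T *\<^sub>v p + (- ?T) *\<^sub>v q) @\<^sub>v (?T *\<^sub>v p + ?T*B*?T *\<^sub>v q)"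
    unfolding Mblock_def by (rule four_block_mat_mult_vec[of _ "2*d" "2*d" _ "2*d" _ "2*d"]) (use A B p q in auto)
  also have "?T*A*?T *\<^sub>v p = ?T *\<^sub>v (A *\<^sub>v (?T *\<^sub>v p))" using A p
    by (metis assoc_mult_mat_vec mult_carrier_mat mult_mat_vec_carrier theta_carrier)
  also have "?T*B*?T *\<^sub>v q = ?T *\<^sub>v (B *\<^sub>v (?T *\<^sub>v q))" using B q
    by (metis assoc_mult_mat_vec mult_carrier_mat mult_mat_vec_carrier theta_carrier)
  also have "(- ?T) *\<^sub>v q = - (?T *\<^sub>v q)" by (rule uminus_mult_mat_vec) (use q in auto)
  also have "?T *\<^sub>v (A *\<^sub>v (?T *\<^sub>v p)) + - (?T *\<^sub>v q) = ?T *\<^sub>v (A *\<^sub>v (?T *\<^sub>v p)) - ?T *\<^sub>v q"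
    by (rule eq_vecI) (use A p q in auto)
  finally show ?thesis .
qed

lemma Jmat_carrier[simp]: "Jmat d \<in> carrier_mat (2*d+2*d) (2*d)"
  unfolding Jmat_def by (rule carrier_append_rows) auto

lemma Jmat_dims[simp]: "dim_col (Jmat d) = 2*d" "dim_row (Jmat d) = 2*d+2*d"
  using Jmat_carrier[of d] by (auto simp del: mult_2 mult_2_right)

lemma Jmat_mult: "z \<in> carrier_vec (2*d) \<Longrightarrow> Jmat d *\<^sub>v z = (- z) @\<^sub>v z"
  unfolding Jmat_def
  by (subst mat_mult_append[of _ "2*d" "2*d" _ "2*d"]) auto

lemma JT_mult: assumes u: "u \<in> carrier_vec (2*d+2*d)"
  shows "transpose_mat (Jmat d) *\<^sub>v u = vec_last u (2*d) - vec_first u (2*d)"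
proof (rule eq_vecI)
  fix i assume "i < dim_vec (vec_last u (2*d) - vec_first u (2*d))"
  hence i: "i < 2*d" by simp
  have u': "u = vec_first u (2*d) @\<^sub>v vec_last u (2*d)" using u by simp
  have "col (Jmat d) i = col (- 1\<^sub>m (2*d)) i @\<^sub>v col (1\<^sub>m (2*d)) i"
    unfolding Jmat_def append_rows_def
    by (rule col_four_block_mat(1)[of _ "2*d" "2*d" _ 0 _ "2*d"]) (use i in auto)
  also have "\<dots> = (- unit_vec (2*d) i) @\<^sub>v unit_vec (2*d) i" using i by simp
  finally have c: "col (Jmat d) i = (- unit_vec (2*d) i) @\<^sub>v unit_vec (2*d) i" .
  have "(transpose_mat (Jmat d) *\<^sub>v u) $ i = col (Jmat d) i \<bullet> u" using i by simp
  also have "\<dots> = (- unit_vec (2*d) i) \<bullet> vec_first u (2*d) + unit_vec (2*d) i \<bullet> vec_last u (2*d)"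
    unfolding c by (subst u', rule scalar_prod_append[of _ "2*d" _ "2*d"]) auto
  also have "\<dots> = (vec_last u (2*d) - vec_first u (2*d)) $ i" using i by simp
  finally show "(transpose_mat (Jmat d) *\<^sub>v u) $ i = (vec_last u (2*d) - vec_first u (2*d)) $ i" .
qed (use u in auto)

lemma wd_inverse: assumes A: "A \<in> carrier_mat (2*d) (2*d)" and B: "B \<in> carrier_mat (2*d) (2*d)"
  and wd: "sharp_wd d A B"
  shows "\<exists>K. the (mat_inverse (Mblock d A B)) = K \<and> K \<in> carrier_mat (2*d+2*d) (2*d+2*d) \<and>
     Mblock d A B * K = 1\<^sub>m (2*d+2*d) \<and> K * Mblock d A B = 1\<^sub>m (2*d+2*d)"
proof -
  let ?M = "Mblock d A B" and ?n = "2*d+2*d"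
  have M: "?M \<in> carrier_mat ?n ?n" using A B by (rule Mblock_carrier)
  have dM: "dim_row ?M = ?n" "dim_col ?M = ?n" using M by (rule carrier_matD)+
  from wd obtain K where K1: "?M * K = 1\<^sub>m (dim_row ?M)" and K2: "K * ?M = 1\<^sub>m (dim_row K)"
    unfolding sharp_wd_def invertible_mat_def inverts_mat_def by blast
  have K1': "?M * K = 1\<^sub>m ?n" using K1 dM by simp
  have dcK: "dim_col K = ?n" using arg_cong[OF K1', of dim_col] by simp
  have drK: "dim_row K = ?n" using arg_cong[OF K2, of dim_col] dM by simp
  have Kc: "K \<in> carrier_mat ?n ?n" using dcK drK by (intro carrier_matI)
  have K2': "K * ?M = 1\<^sub>m ?n" using K2 drK by simp
  have U: "?M \<in> Units (ring_mat TYPE(complex) ?n ())"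
    unfolding Units_def mem_Collect_eq
  proof (rule conjI)
    show "?M \<in> carrier (ring_mat TYPE(complex) ?n ())" unfolding ring_mat_simps by (rule M)
    show "\<exists>x\<in>carrier (ring_mat TYPE(complex) ?n ()). x \<otimes>\<^bsub>ring_mat TYPE(complex) ?n ()\<^esub> ?M = \<one>\<^bsub>ring_mat TYPE(complex) ?n ()\<^esub> \<and>
        ?M \<otimes>\<^bsub>ring_mat TYPE(complex) ?n ()\<^esub> x = \<one>\<^bsub>ring_mat TYPE(complex) ?n ()\<^esub>"
    proof (rule bexI[of _ K])
      show "K \<in> carrier (ring_mat TYPE(complex) ?n ())" unfolding ring_mat_simps by (rule Kc)
      show "K \<otimes>\<^bsub>ring_mat TYPE(complex) ?n ()\<^esub> ?M = \<one>\<^bsub>ring_mat TYPE(complex) ?n ()\<^esub> \<and>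
        ?M \<otimes>\<^bsub>ring_mat TYPE(complex) ?n ()\<^esub> K = \<one>\<^bsub>ring_mat TYPE(complex) ?n ()\<^esub>"
        unfolding ring_mat_simps using K1' K2' by (rule conjI[rotated])
    qed
  qed
  show ?thesis
  proof (cases "mat_inverse ?M")
    case None
    have "?M \<notin> Units (ring_mat TYPE(complex) ?n ())" by (rule mat_inverse(1)[OF M None])
    thus ?thesis using U by (rule notE)
  next
    case (Some K')
    have h: "?M * K' = 1\<^sub>m ?n \<and> K' * ?M = 1\<^sub>m ?n \<and> K' \<in> carrier_mat ?n ?n" by (rule mat_inverse(2)[OF M Some])
    show ?thesis
    proof (rule exI[of _ K'], intro conjI)
      show "the (mat_inverse ?M) = K'" unfolding Some by simp
    qed (use h in \<open>simp_all only:\<close>)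
  qed
qed


lemma Tneg: "w \<in> carrier_vec (2*d) \<Longrightarrow> theta d *\<^sub>v (- w) = - (theta d *\<^sub>v w)"
  by (rule eq_vecI) auto

lemma Tadd: "v \<in> carrier_vec (2*d) \<Longrightarrow> w \<in> carrier_vec (2*d) \<Longrightarrow>
   theta d *\<^sub>v (v + w) = theta d *\<^sub>v v + theta d *\<^sub>v w"
  by (rule mult_add_distrib_mat_vec[OF theta_carrier])

lemma Tminus: "v \<in> carrier_vec (2*d) \<Longrightarrow> w \<in> carrier_vec (2*d) \<Longrightarrow>
   theta d *\<^sub>v (v - w) = theta d *\<^sub>v v - theta d *\<^sub>v w"
  by (rule mult_minus_distrib_mat_vec[OF theta_carrier])

lemma sharp_carrier[simp]: "sharp d A B \<in> carrier_mat (2*d) (2*d)"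
  unfolding sharp_def by (rule carrier_matI) simp_all

lemma sharp_unique: assumes A: "A \<in> carrier_mat (2*d) (2*d)" and B: "B \<in> carrier_mat (2*d) (2*d)"
  and wd: "sharp_wd d A B" and z: "z \<in> carrier_vec (2*d)"
  and p: "p \<in> carrier_vec (2*d)" and q: "q \<in> carrier_vec (2*d)"
  and E: "Mblock d A B *\<^sub>v (p @\<^sub>v q) = (- z) @\<^sub>v z"
shows "sharp d A B *\<^sub>v z = q - p"
proof -
  obtain K where K: "the (mat_inverse (Mblock d A B)) = K" "K \<in> carrier_mat (2*d+2*d) (2*d+2*d)"
     "Mblock d A B * K = 1\<^sub>m (2*d+2*d)" "K * Mblock d A B = 1\<^sub>m (2*d+2*d)"
    using wd_inverse[OF A B wd] by blast
  have M: "Mblock d A B \<in> carrier_mat (2*d+2*d) (2*d+2*d)" using A B by (rule Mblock_carrier)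
  have v: "p @\<^sub>v q \<in> carrier_vec (2*d+2*d)" using p q by (rule append_carrier_vec)
  have Jz: "Jmat d *\<^sub>v z = Mblock d A B *\<^sub>v (p @\<^sub>v q)" using E Jmat_mult[OF z] by simp
  have "sharp d A B *\<^sub>v z = transpose_mat (Jmat d) *\<^sub>v (K *\<^sub>v (Jmat d *\<^sub>v z))"
  proof -
    have JT: "transpose_mat (Jmat d) \<in> carrier_mat (2*d) (2*d+2*d)" by (rule transpose_carrier_mat[THEN iffD2, OF Jmat_carrier])
    have JTK: "transpose_mat (Jmat d) * K \<in> carrier_mat (2*d) (2*d+2*d)" by (rule mult_carrier_mat[OF JT K(2)])
    have "sharp d A B *\<^sub>v z = (transpose_mat (Jmat d) * K) *\<^sub>v (Jmat d *\<^sub>v z)"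
      unfolding sharp_def K(1) by (rule assoc_mult_mat_vec[OF JTK Jmat_carrier z])
    also have "\<dots> = transpose_mat (Jmat d) *\<^sub>v (K *\<^sub>v (Jmat d *\<^sub>v z))"
      by (rule assoc_mult_mat_vec[OF JT K(2)]) (rule mult_mat_vec_carrier[OF Jmat_carrier z])
    finally show ?thesis .
  qed
  also have "K *\<^sub>v (Jmat d *\<^sub>v z) = p @\<^sub>v q" unfolding Jz
    using assoc_mult_mat_vec[OF K(2) M v, symmetric] K(4) one_mult_mat_vec[OF v] by simp
  also have "transpose_mat (Jmat d) *\<^sub>v (p @\<^sub>v q) = vec_last (p @\<^sub>v q) (2*d) - vec_first (p @\<^sub>v q) (2*d)"
    by (rule JT_mult[OF v])
  also have "\<dots> = q - p"
    by (rule eq_vecI) (use p q in \<open>auto simp: vec_first_def vec_last_def\<close>)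
  finally show ?thesis .
qed

lemma sharp_exists: assumes A: "A \<in> carrier_mat (2*d) (2*d)" and B: "B \<in> carrier_mat (2*d) (2*d)"
  and wd: "sharp_wd d A B" and z: "z \<in> carrier_vec (2*d)"
shows "\<exists>p q. p \<in> carrier_vec (2*d) \<and> q \<in> carrier_vec (2*d) \<and> Mblock d A B *\<^sub>v (p @\<^sub>v q) = (- z) @\<^sub>v z"
proof -
  obtain K where K: "the (mat_inverse (Mblock d A B)) = K" "K \<in> carrier_mat (2*d+2*d) (2*d+2*d)"
     "Mblock d A B * K = 1\<^sub>m (2*d+2*d)" "K * Mblock d A B = 1\<^sub>m (2*d+2*d)"
    using wd_inverse[OF A B wd] by blast
  have M: "Mblock d A B \<in> carrier_mat (2*d+2*d) (2*d+2*d)" using A B by (rule Mblock_carrier)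
  define v where "v = K *\<^sub>v (Jmat d *\<^sub>v z)"
  have vc: "v \<in> carrier_vec (2*d+2*d)" unfolding v_def by (rule mult_mat_vec_carrier[OF K(2) mult_mat_vec_carrier[OF Jmat_carrier z]])
  have "Mblock d A B *\<^sub>v v = Jmat d *\<^sub>v z" unfolding v_def
    using assoc_mult_mat_vec[OF M K(2) mult_mat_vec_carrier[OF Jmat_carrier z], symmetric] K(3)
      one_mult_mat_vec[OF mult_mat_vec_carrier[OF Jmat_carrier z]] by simp
  hence "Mblock d A B *\<^sub>v (vec_first v (2*d) @\<^sub>v vec_last v (2*d)) = (- z) @\<^sub>v z"
    using vc Jmat_mult[OF z] by simp
  thus ?thesis using vec_first_carrier vec_last_carrier by blast
qed



lemma sharp_dims[simp]: "dim_row (sharp d A B) = 2*d" "dim_col (sharp d A B) = 2*d"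
  by (metis carrier_matD sharp_carrier)+

lemma L1: assumes A: "A \<in> carrier_mat (2*d) (2*d)" and B: "B \<in> carrier_mat (2*d) (2*d)"
  and wd: "sharp_wd d A B" and w: "w \<in> carrier_vec (2*d)"
shows "\<exists>w1 w2. w1 \<in> carrier_vec (2*d) \<and> w2 \<in> carrier_vec (2*d) \<and>
   theta d *\<^sub>v w + sharp d A B *\<^sub>v w = theta d *\<^sub>v w2 + B *\<^sub>v w2 \<and>
   theta d *\<^sub>v w2 - B *\<^sub>v w2 = theta d *\<^sub>v w1 + A *\<^sub>v w1 \<and>
   theta d *\<^sub>v w1 - A *\<^sub>v w1 = theta d *\<^sub>v w - sharp d A B *\<^sub>v w"
proof -
  let ?T = "theta d"
  obtain p q where p: "p \<in> carrier_vec (2*d)" and q: "q \<in> carrier_vec (2*d)"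
    and E: "Mblock d A B *\<^sub>v (p @\<^sub>v q) = (- w) @\<^sub>v w"
    using sharp_exists[OF A B wd w] by blast
  have X: "sharp d A B *\<^sub>v w = q - p" by (rule sharp_unique[OF A B wd w p q E])
  define w1 where "w1 = ?T *\<^sub>v p"
  define w2 where "w2 = ?T *\<^sub>v q"
  have w1: "w1 \<in> carrier_vec (2*d)" unfolding w1_def by (rule mult_mat_vec_carrier[OF theta_carrier p])
  have w2: "w2 \<in> carrier_vec (2*d)" unfolding w2_def by (rule mult_mat_vec_carrier[OF theta_carrier q])
  have E': "(?T *\<^sub>v (A *\<^sub>v w1) - w2) @\<^sub>v (w1 + ?T *\<^sub>v (B *\<^sub>v w2)) = (- w) @\<^sub>v w"
    using E Mblock_mult[OF A B p q] unfolding w1_def w2_def by simp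
  have Aw1: "A *\<^sub>v w1 \<in> carrier_vec (2*d)" by (rule mult_mat_vec_carrier[OF A w1])
  have Bw2: "B *\<^sub>v w2 \<in> carrier_vec (2*d)" by (rule mult_mat_vec_carrier[OF B w2])
  have TAw1: "?T *\<^sub>v (A *\<^sub>v w1) \<in> carrier_vec (2*d)" by (rule mult_mat_vec_carrier[OF theta_carrier Aw1])
  have TBw2: "?T *\<^sub>v (B *\<^sub>v w2) \<in> carrier_vec (2*d)" by (rule mult_mat_vec_carrier[OF theta_carrier Bw2])
  have Tw: "?T *\<^sub>v w \<in> carrier_vec (2*d)" by (rule mult_mat_vec_carrier[OF theta_carrier w])
  have c1: "?T *\<^sub>v (A *\<^sub>v w1) - w2 \<in> carrier_vec (2*d)" by (rule minus_carrier_vec[OF TAw1 w2])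
  have E1: "?T *\<^sub>v (A *\<^sub>v w1) - w2 = - w" and E2: "w1 + ?T *\<^sub>v (B *\<^sub>v w2) = w"
    using E' append_vec_eq[OF c1, of "- w"] w by auto
  have T1: "?T *\<^sub>v w1 = p" unfolding w1_def using p by (rule TTv)
  have T2: "?T *\<^sub>v w2 = q" unfolding w2_def using q by (rule TTv)
  have "?T *\<^sub>v (?T *\<^sub>v (A *\<^sub>v w1) - w2) = ?T *\<^sub>v (- w)" using E1 by simp
  moreover have "?T *\<^sub>v (?T *\<^sub>v (A *\<^sub>v w1) - w2) = A *\<^sub>v w1 - q"
    by (simp only: Tminus[OF TAw1 w2] TTv[OF Aw1] T2)
  moreover have "?T *\<^sub>v (- w) = - (?T *\<^sub>v w)" by (rule Tneg[OF w])
  ultimately have H1: "A *\<^sub>v w1 - q = - (?T *\<^sub>v w)" by simp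
  have "?T *\<^sub>v (w1 + ?T *\<^sub>v (B *\<^sub>v w2)) = ?T *\<^sub>v w" using E2 by simp
  moreover have "?T *\<^sub>v (w1 + ?T *\<^sub>v (B *\<^sub>v w2)) = p + B *\<^sub>v w2"
    by (simp only: Tadd[OF w1 TBw2] TTv[OF Bw2] T1)
  ultimately have H2: "p + B *\<^sub>v w2 = ?T *\<^sub>v w" by simp
  have dims: "dim_vec p = 2*d" "dim_vec q = 2*d" "dim_vec w1 = 2*d" "dim_vec w2 = 2*d" "dim_vec w = 2*d"
    using p q w1 w2 w by auto
  have i1: "(A *\<^sub>v w1) $ i = q $ i - (?T *\<^sub>v w) $ i" if "i < 2*d" for i
    using arg_cong[OF H1, of "\<lambda>v. v $ i"] that A dims by (simp add: algebra_simps)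
  have i2: "(B *\<^sub>v w2) $ i = (?T *\<^sub>v w) $ i - p $ i" if "i < 2*d" for i
    using arg_cong[OF H2, of "\<lambda>v. v $ i"] that B dims by (simp add: algebra_simps)
  have iX: "(sharp d A B *\<^sub>v w) $ i = q $ i - p $ i" if "i < 2*d" for i
    using X that dims by simp
  show ?thesis
  proof (intro exI conjI)
    show "?T *\<^sub>v w + sharp d A B *\<^sub>v w = ?T *\<^sub>v w2 + B *\<^sub>v w2"
      by (rule eq_vecI) (use A B dims in \<open>simp_all add: i1 i2 iX T1 T2 del: index_mult_mat_vec\<close>)
    show "?T *\<^sub>v w2 - B *\<^sub>v w2 = ?T *\<^sub>v w1 + A *\<^sub>v w1"
      by (rule eq_vecI) (use A B dims in \<open>simp_all add: i1 i2 iX T1 T2 del: index_mult_mat_vec\<close>)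
    show "?T *\<^sub>v w1 - A *\<^sub>v w1 = ?T *\<^sub>v w - sharp d A B *\<^sub>v w"
      by (rule eq_vecI) (use A B dims in \<open>simp_all add: i1 i2 iX T1 T2 del: index_mult_mat_vec\<close>)
  qed (use w1 w2 in auto)
qed


lemma L2: assumes A: "A \<in> carrier_mat (2*d) (2*d)" and B: "B \<in> carrier_mat (2*d) (2*d)"
  and wd: "sharp_wd d A B" and w1: "w1 \<in> carrier_vec (2*d)" and w2: "w2 \<in> carrier_vec (2*d)"
  and h: "theta d *\<^sub>v w2 - B *\<^sub>v w2 = theta d *\<^sub>v w1 + A *\<^sub>v w1"
shows "\<exists>z. z \<in> carrier_vec (2*d) \<and>
   theta d *\<^sub>v z + sharp d A B *\<^sub>v z = theta d *\<^sub>v w2 + B *\<^sub>v w2 \<and>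
   theta d *\<^sub>v z - sharp d A B *\<^sub>v z = theta d *\<^sub>v w1 - A *\<^sub>v w1"
proof -
  let ?T = "theta d"
  define p where "p = ?T *\<^sub>v w1"
  define q where "q = ?T *\<^sub>v w2"
  have p: "p \<in> carrier_vec (2*d)" unfolding p_def by (rule mult_mat_vec_carrier[OF theta_carrier w1])
  have q: "q \<in> carrier_vec (2*d)" unfolding q_def by (rule mult_mat_vec_carrier[OF theta_carrier w2])
  have Aw1: "A *\<^sub>v w1 \<in> carrier_vec (2*d)" by (rule mult_mat_vec_carrier[OF A w1])
  have Bw2: "B *\<^sub>v w2 \<in> carrier_vec (2*d)" by (rule mult_mat_vec_carrier[OF B w2])
  have TAw1: "?T *\<^sub>v (A *\<^sub>v w1) \<in> carrier_vec (2*d)" by (rule mult_mat_vec_carrier[OF theta_carrier Aw1])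
  have TBw2: "?T *\<^sub>v (B *\<^sub>v w2) \<in> carrier_vec (2*d)" by (rule mult_mat_vec_carrier[OF theta_carrier Bw2])
  have Tw1: "?T *\<^sub>v w1 \<in> carrier_vec (2*d)" by (rule mult_mat_vec_carrier[OF theta_carrier w1])
  have Tw2: "?T *\<^sub>v w2 \<in> carrier_vec (2*d)" by (rule mult_mat_vec_carrier[OF theta_carrier w2])
  define z where "z = w1 + ?T *\<^sub>v (B *\<^sub>v w2)"
  have z: "z \<in> carrier_vec (2*d)" unfolding z_def by (rule add_carrier_vec[OF w1 TBw2])
  have T1: "?T *\<^sub>v p = w1" unfolding p_def using w1 by (rule TTv)
  have T2: "?T *\<^sub>v q = w2" unfolding q_def using w2 by (rule TTv)
  have "?T *\<^sub>v (?T *\<^sub>v w2 - B *\<^sub>v w2) = ?T *\<^sub>v (?T *\<^sub>v w1 + A *\<^sub>v w1)" using h by simp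
  hence h': "w2 - ?T *\<^sub>v (B *\<^sub>v w2) = w1 + ?T *\<^sub>v (A *\<^sub>v w1)"
    by (simp only: Tminus[OF Tw2 Bw2] Tadd[OF Tw1 Aw1] TTv[OF w1] TTv[OF w2])
  have dims: "dim_vec p = 2*d" "dim_vec q = 2*d" "dim_vec w1 = 2*d" "dim_vec w2 = 2*d" "dim_vec z = 2*d"
    using p q w1 w2 z by auto
  have ih: "(?T *\<^sub>v (A *\<^sub>v w1)) $ i = w2 $ i - (?T *\<^sub>v (B *\<^sub>v w2)) $ i - w1 $ i" if "i < 2*d" for i
    using arg_cong[OF h', of "\<lambda>v. v $ i"] that dims by (simp add: algebra_simps del: index_mult_mat_vec)
  have E1: "?T *\<^sub>v (A *\<^sub>v (?T *\<^sub>v p)) - ?T *\<^sub>v q = - z"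
    unfolding T1 T2 z_def by (rule eq_vecI) (use dims in \<open>simp_all add: ih del: index_mult_mat_vec\<close>)
  have E2: "?T *\<^sub>v p + ?T *\<^sub>v (B *\<^sub>v (?T *\<^sub>v q)) = z" unfolding T1 T2 z_def ..
  have E: "Mblock d A B *\<^sub>v (p @\<^sub>v q) = (- z) @\<^sub>v z"
    unfolding Mblock_mult[OF A B p q] E1 E2 ..
  have X: "sharp d A B *\<^sub>v z = q - p" by (rule sharp_unique[OF A B wd z p q E])
  have Tz: "?T *\<^sub>v z = ?T *\<^sub>v w1 + B *\<^sub>v w2"
    unfolding z_def by (simp only: Tadd[OF w1 TBw2] TTv[OF Bw2])
  have iTz: "(?T *\<^sub>v z) $ i = (?T *\<^sub>v w1) $ i + (B *\<^sub>v w2) $ i" if "i < 2*d" for i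
    using arg_cong[OF Tz, of "\<lambda>v. v $ i"] that B by (simp del: index_mult_mat_vec)
  have iX: "(sharp d A B *\<^sub>v z) $ i = (?T *\<^sub>v w2) $ i - (?T *\<^sub>v w1) $ i" if "i < 2*d" for i
    using X that dims unfolding p_def q_def by simp
  have ih2: "(B *\<^sub>v w2) $ i = (?T *\<^sub>v w2) $ i - (?T *\<^sub>v w1) $ i - (A *\<^sub>v w1) $ i" if "i < 2*d" for i
    using arg_cong[OF h, of "\<lambda>v. v $ i"] that A B by (simp add: algebra_simps del: index_mult_mat_vec)
  show ?thesis
  proof (intro exI conjI)
    show "?T *\<^sub>v z + sharp d A B *\<^sub>v z = ?T *\<^sub>v w2 + B *\<^sub>v w2"
      by (rule eq_vecI) (use A B dims in \<open>simp_all add: iTz iX del: index_mult_mat_vec\<close>)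
    show "?T *\<^sub>v z - sharp d A B *\<^sub>v z = ?T *\<^sub>v w1 - A *\<^sub>v w1"
      by (rule eq_vecI) (use A B dims in \<open>simp_all add: iTz iX ih2 del: index_mult_mat_vec\<close>)
  qed (rule z)
qed

lemma aux: fixes a b x y :: complex assumes "a + x = b + y" "a - x = b - y" shows "a = b"
proof -
  have "a = ((a + x) + (a - x)) / 2" by simp
  also have "\<dots> = ((b + y) + (b - y)) / 2" using assms by simp
  also have "\<dots> = b" by simp
  finally show ?thesis .
qed

lemma L3: assumes X: "X \<in> carrier_mat (2*d) (2*d)" and Y: "Y \<in> carrier_mat (2*d) (2*d)"
  and h: "\<And>w. w \<in> carrier_vec (2*d) \<Longrightarrow> \<exists>w'. w' \<in> carrier_vec (2*d) \<and>
     theta d *\<^sub>v w + X *\<^sub>v w = theta d *\<^sub>v w' + Y *\<^sub>v w' \<and>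
     theta d *\<^sub>v w - X *\<^sub>v w = theta d *\<^sub>v w' - Y *\<^sub>v w'"
  shows "X = Y"
proof -
  have Xw: "X *\<^sub>v w = Y *\<^sub>v w" if w: "w \<in> carrier_vec (2*d)" for w
  proof -
    obtain w' where w': "w' \<in> carrier_vec (2*d)" and
      h1: "theta d *\<^sub>v w + X *\<^sub>v w = theta d *\<^sub>v w' + Y *\<^sub>v w'" and
      h2: "theta d *\<^sub>v w - X *\<^sub>v w = theta d *\<^sub>v w' - Y *\<^sub>v w'" using h[OF w] by blast
    have i1: "(theta d *\<^sub>v w) $ i + (X *\<^sub>v w) $ i = (theta d *\<^sub>v w') $ i + (Y *\<^sub>v w') $ i" if "i < 2*d" for i
      using arg_cong[OF h1, of "\<lambda>v. v $ i"] that X Y by (simp del: index_mult_mat_vec)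
    have i2: "(theta d *\<^sub>v w) $ i - (X *\<^sub>v w) $ i = (theta d *\<^sub>v w') $ i - (Y *\<^sub>v w') $ i" if "i < 2*d" for i
      using arg_cong[OF h2, of "\<lambda>v. v $ i"] that X Y by (simp del: index_mult_mat_vec)
    have "theta d *\<^sub>v w = theta d *\<^sub>v w'"
    proof (rule eq_vecI)
      fix i assume "i < dim_vec (theta d *\<^sub>v w')"
      hence i: "i < 2*d" by simp
      from i1[OF i] i2[OF i] show "(theta d *\<^sub>v w) $ i = (theta d *\<^sub>v w') $ i"
        by (rule aux)
    qed simp
    hence "theta d *\<^sub>v (theta d *\<^sub>v w) = theta d *\<^sub>v (theta d *\<^sub>v w')" by simp
    hence "w = w'" using TTv[OF w] TTv[OF w'] by simp
    moreover have "(theta d *\<^sub>v w) $ i + (X *\<^sub>v w) $ i = (theta d *\<^sub>v w) $ i + (Y *\<^sub>v w) $ i" if "i < 2*d" for i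
      using i1[OF that] \<open>w = w'\<close> by simp
    ultimately show ?thesis using X Y by (intro eq_vecI) auto
  qed
  show ?thesis
  proof (rule eq_matI)
    fix i j assume i: "i < dim_row Y" and j: "j < dim_col Y"
    hence i': "i < 2*d" and j': "j < 2*d" using Y by auto
    have "(X *\<^sub>v unit_vec (2*d) j) $ i = (Y *\<^sub>v unit_vec (2*d) j) $ i" using Xw[of "unit_vec (2*d) j"] by simp
    thus "X $$ (i, j) = Y $$ (i, j)" using X Y i' j' by simp
  qed (use X Y in auto)
qed



lemma sharp_assoc: assumes A: "A \<in> carrier_mat (2*d) (2*d)" and B: "B \<in> carrier_mat (2*d) (2*d)"
  and C: "C \<in> carrier_mat (2*d) (2*d)"
  and wd1: "sharp_wd d A B" and wd2: "sharp_wd d B C"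
  and wd3: "sharp_wd d (sharp d A B) C" and wd4: "sharp_wd d A (sharp d B C)"
shows "sharp d (sharp d A B) C = sharp d A (sharp d B C)"
proof (rule L3[OF sharp_carrier sharp_carrier])
  fix w :: "complex vec" assume w: "w \<in> carrier_vec (2*d)"
  let ?T = "theta d" and ?AB = "sharp d A B" and ?BC = "sharp d B C"
  obtain w1 w2 where w1: "w1 \<in> carrier_vec (2*d)" and w2: "w2 \<in> carrier_vec (2*d)" and
    a1: "?T *\<^sub>v w + sharp d ?AB C *\<^sub>v w = ?T *\<^sub>v w2 + C *\<^sub>v w2" and
    a2: "?T *\<^sub>v w2 - C *\<^sub>v w2 = ?T *\<^sub>v w1 + ?AB *\<^sub>v w1" and
    a3: "?T *\<^sub>v w1 - ?AB *\<^sub>v w1 = ?T *\<^sub>v w - sharp d ?AB C *\<^sub>v w"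
    using L1[OF sharp_carrier C wd3 w] by blast
  obtain v1 v2 where v1: "v1 \<in> carrier_vec (2*d)" and v2: "v2 \<in> carrier_vec (2*d)" and
    b1: "?T *\<^sub>v w1 + ?AB *\<^sub>v w1 = ?T *\<^sub>v v2 + B *\<^sub>v v2" and
    b2: "?T *\<^sub>v v2 - B *\<^sub>v v2 = ?T *\<^sub>v v1 + A *\<^sub>v v1" and
    b3: "?T *\<^sub>v v1 - A *\<^sub>v v1 = ?T *\<^sub>v w1 - ?AB *\<^sub>v w1"
    using L1[OF A B wd1 w1] by blast
  have h: "?T *\<^sub>v w2 - C *\<^sub>v w2 = ?T *\<^sub>v v2 + B *\<^sub>v v2" using a2 b1 by simp
  obtain w3 where w3: "w3 \<in> carrier_vec (2*d)" and
    c1: "?T *\<^sub>v w3 + ?BC *\<^sub>v w3 = ?T *\<^sub>v w2 + C *\<^sub>v w2" and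
    c2: "?T *\<^sub>v w3 - ?BC *\<^sub>v w3 = ?T *\<^sub>v v2 - B *\<^sub>v v2"
    using L2[OF B C wd2 v2 w2 h] by blast
  have h2: "?T *\<^sub>v w3 - ?BC *\<^sub>v w3 = ?T *\<^sub>v v1 + A *\<^sub>v v1" using c2 b2 by simp
  obtain z where z: "z \<in> carrier_vec (2*d)" and
    e1: "?T *\<^sub>v z + sharp d A ?BC *\<^sub>v z = ?T *\<^sub>v w3 + ?BC *\<^sub>v w3" and
    e2: "?T *\<^sub>v z - sharp d A ?BC *\<^sub>v z = ?T *\<^sub>v v1 - A *\<^sub>v v1"
    using L2[OF A sharp_carrier wd4 v1 w3 h2] by blast
  show "\<exists>w'. w' \<in> carrier_vec (2*d) \<and>
     ?T *\<^sub>v w + sharp d ?AB C *\<^sub>v w = ?T *\<^sub>v w' + sharp d A ?BC *\<^sub>v w' \<and>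
     ?T *\<^sub>v w - sharp d ?AB C *\<^sub>v w = ?T *\<^sub>v w' - sharp d A ?BC *\<^sub>v w'"
    using z a1 c1 e1 e2 b3 a3 by metis
qed

lemma zero_mult_vec[simp]: "v \<in> carrier_vec n \<Longrightarrow> 0\<^sub>m m n *\<^sub>v v = 0\<^sub>v m"
  by (rule eq_vecI) auto

lemma sharp_zero_right: assumes A: "A \<in> carrier_mat (2*d) (2*d)" and wd: "sharp_wd d A (0\<^sub>m (2*d) (2*d))"
  shows "sharp d A (0\<^sub>m (2*d) (2*d)) = A"
proof (rule L3[OF sharp_carrier A])
  fix w :: "complex vec" assume w: "w \<in> carrier_vec (2*d)"
  let ?T = "theta d" and ?X = "sharp d A (0\<^sub>m (2*d) (2*d))"
  obtain w1 w2 where w1: "w1 \<in> carrier_vec (2*d)" and w2: "w2 \<in> carrier_vec (2*d)" and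
    a1: "?T *\<^sub>v w + ?X *\<^sub>v w = ?T *\<^sub>v w2 + 0\<^sub>m (2*d) (2*d) *\<^sub>v w2" and
    a2: "?T *\<^sub>v w2 - 0\<^sub>m (2*d) (2*d) *\<^sub>v w2 = ?T *\<^sub>v w1 + A *\<^sub>v w1" and
    a3: "?T *\<^sub>v w1 - A *\<^sub>v w1 = ?T *\<^sub>v w - ?X *\<^sub>v w"
    using L1[OF A zero_carrier_mat wd w] by blast
  have "?T *\<^sub>v w2 + 0\<^sub>m (2*d) (2*d) *\<^sub>v w2 = ?T *\<^sub>v w2 - 0\<^sub>m (2*d) (2*d) *\<^sub>v w2"
    by (rule eq_vecI) (use w2 in simp_all)
  thus "\<exists>w'. w' \<in> carrier_vec (2*d) \<and> ?T *\<^sub>v w + ?X *\<^sub>v w = ?T *\<^sub>v w' + A *\<^sub>v w' \<and>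
     ?T *\<^sub>v w - ?X *\<^sub>v w = ?T *\<^sub>v w' - A *\<^sub>v w'"
    using w1 a1 a2 a3 by metis
qed

lemma sharp_zero_left: assumes A: "A \<in> carrier_mat (2*d) (2*d)" and wd: "sharp_wd d (0\<^sub>m (2*d) (2*d)) A"
  shows "sharp d (0\<^sub>m (2*d) (2*d)) A = A"
proof (rule L3[OF sharp_carrier A])
  fix w :: "complex vec" assume w: "w \<in> carrier_vec (2*d)"
  let ?T = "theta d" and ?X = "sharp d (0\<^sub>m (2*d) (2*d)) A"
  obtain w1 w2 where w1: "w1 \<in> carrier_vec (2*d)" and w2: "w2 \<in> carrier_vec (2*d)" and
    a1: "?T *\<^sub>v w + ?X *\<^sub>v w = ?T *\<^sub>v w2 + A *\<^sub>v w2" and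
    a2: "?T *\<^sub>v w2 - A *\<^sub>v w2 = ?T *\<^sub>v w1 + 0\<^sub>m (2*d) (2*d) *\<^sub>v w1" and
    a3: "?T *\<^sub>v w1 - 0\<^sub>m (2*d) (2*d) *\<^sub>v w1 = ?T *\<^sub>v w - ?X *\<^sub>v w"
    using L1[OF zero_carrier_mat A wd w] by blast
  have "?T *\<^sub>v w1 + 0\<^sub>m (2*d) (2*d) *\<^sub>v w1 = ?T *\<^sub>v w1 - 0\<^sub>m (2*d) (2*d) *\<^sub>v w1"
    by (rule eq_vecI) (use w1 in simp_all)
  thus "\<exists>w'. w' \<in> carrier_vec (2*d) \<and> ?T *\<^sub>v w + ?X *\<^sub>v w = ?T *\<^sub>v w' + A *\<^sub>v w' \<and>
     ?T *\<^sub>v w - ?X *\<^sub>v w = ?T *\<^sub>v w' - A *\<^sub>v w'"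
    using w2 a1 a2 a3 by metis
qed



lemma cnj_mult: assumes M: "M \<in> carrier_mat n n" and v: "v \<in> carrier_vec n" and i: "i < n"
  shows "cnj ((M *\<^sub>v v) $ i) = (conj_mat M *\<^sub>v map_vec cnj v) $ i"
  using M v i by (simp add: conj_mat_def scalar_prod_def)

lemma conj_theta: "conj_mat (theta d) = - theta d"
  unfolding conj_mat_def theta_def by (rule eq_matI) auto

lemma conj_carrier[simp]: "A \<in> carrier_mat n m \<Longrightarrow> conj_mat A \<in> carrier_mat n m"
  unfolding conj_mat_def by simp

lemma cnjT: assumes v: "v \<in> carrier_vec (2*d)" and i: "i < 2*d"
  shows "cnj ((theta d *\<^sub>v v) $ i) = - (theta d *\<^sub>v map_vec cnj v) $ i"
  using cnj_mult[OF theta_carrier v i] v i unfolding conj_theta by simp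

lemma cv_cv[simp]: "map_vec cnj (map_vec cnj v) = v"
  by (rule eq_vecI) auto

lemma negM: fixes M :: "complex mat" assumes "v \<in> carrier_vec n" "M \<in> carrier_mat n n" "i < n" shows "((- M) *\<^sub>v v) $ i = - (M *\<^sub>v v) $ i"
proof -
  have "(- M) *\<^sub>v v = - (M *\<^sub>v v)" by (rule uminus_mult_mat_vec) (use assms in \<open>simp add: carrier_matD carrier_vecD\<close>)
  thus ?thesis using assms by simp
qed

lemma conj_dims[simp]: "dim_row (conj_mat A) = dim_row A" "dim_col (conj_mat A) = dim_col A"
  unfolding conj_mat_def by simp_all

lemma lin1: fixes a b c e :: complex assumes h: "- a - b = - c + e" shows "c - e = a + b"
proof -
  have "c - e = - (- c + e)" by simp
  also have "\<dots> = - (- a - b)" using h by simp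
  also have "\<dots> = a + b" by simp
  finally show ?thesis .
qed
lemma lin2: fixes a b c e :: complex assumes h: "- a - b = - c - e" shows "c + e = a + b"
proof -
  have "c + e = - (- c - e)" by simp
  also have "\<dots> = - (- a - b)" using h by simp
  also have "\<dots> = a + b" by simp
  finally show ?thesis .
qed
lemma lin3: fixes a b c e :: complex assumes h: "- a + b = - c + e" shows "a - b = c - e"
proof -
  have "a - b = - (- a + b)" by simp
  also have "\<dots> = - (- c + e)" using h by simp
  also have "\<dots> = c - e" by simp
  finally show ?thesis .
qed

lemma sharp_conj: assumes A: "A \<in> carrier_mat (2*d) (2*d)" and B: "B \<in> carrier_mat (2*d) (2*d)"
  and wd1: "sharp_wd d A B" and wd2: "sharp_wd d (conj_mat B) (conj_mat A)"
  shows "conj_mat (sharp d A B) = sharp d (conj_mat B) (conj_mat A)"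
proof (rule L3[OF conj_carrier[OF sharp_carrier] sharp_carrier])
  fix w :: "complex vec" assume w: "w \<in> carrier_vec (2*d)"
  let ?T = "theta d" and ?X = "sharp d A B" and ?Y = "sharp d (conj_mat B) (conj_mat A)"
  let ?cA = "conj_mat A" and ?cB = "conj_mat B" and ?cX = "conj_mat ?X"
  have wb: "map_vec cnj w \<in> carrier_vec (2*d)" using w by simp
  obtain w1 w2 where w1: "w1 \<in> carrier_vec (2*d)" and w2: "w2 \<in> carrier_vec (2*d)" and
    a1: "?T *\<^sub>v map_vec cnj w + ?X *\<^sub>v map_vec cnj w = ?T *\<^sub>v w2 + B *\<^sub>v w2" and
    a2: "?T *\<^sub>v w2 - B *\<^sub>v w2 = ?T *\<^sub>v w1 + A *\<^sub>v w1" and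
    a3: "?T *\<^sub>v w1 - A *\<^sub>v w1 = ?T *\<^sub>v map_vec cnj w - ?X *\<^sub>v map_vec cnj w"
    using L1[OF A B wd1 wb] by blast
  let ?u1 = "map_vec cnj w1" and ?u2 = "map_vec cnj w2"
  have u1: "?u1 \<in> carrier_vec (2*d)" and u2: "?u2 \<in> carrier_vec (2*d)" using w1 w2 by auto
  note simps = cnjT cnj_mult[OF A] cnj_mult[OF B] cnj_mult[OF sharp_carrier] w w1 w2 wb A B
    carrier_matD[OF A] carrier_matD[OF B] carrier_vecD[OF w1] carrier_vecD[OF w2] carrier_vecD[OF w]
  have c1: "- (?T *\<^sub>v w) $ i + (?cX *\<^sub>v w) $ i = - (?T *\<^sub>v ?u2) $ i + (?cB *\<^sub>v ?u2) $ i" if i: "i < 2*d" for i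
  proof -
    have "cnj ((?T *\<^sub>v map_vec cnj w + ?X *\<^sub>v map_vec cnj w) $ i) = cnj ((?T *\<^sub>v w2 + B *\<^sub>v w2) $ i)"
      using a1 by simp
    thus ?thesis using i by (simp add: simps del: index_mult_mat_vec)
  qed
  have c2: "- (?T *\<^sub>v ?u2) $ i - (?cB *\<^sub>v ?u2) $ i = - (?T *\<^sub>v ?u1) $ i + (?cA *\<^sub>v ?u1) $ i" if i: "i < 2*d" for i
  proof -
    have "cnj ((?T *\<^sub>v w2 - B *\<^sub>v w2) $ i) = cnj ((?T *\<^sub>v w1 + A *\<^sub>v w1) $ i)"
      using a2 by simp
    thus ?thesis using i by (simp add: simps del: index_mult_mat_vec)
  qed
  have c3: "- (?T *\<^sub>v ?u1) $ i - (?cA *\<^sub>v ?u1) $ i = - (?T *\<^sub>v w) $ i - (?cX *\<^sub>v w) $ i" if i: "i < 2*d" for i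
  proof -
    have "cnj ((?T *\<^sub>v w1 - A *\<^sub>v w1) $ i) = cnj ((?T *\<^sub>v map_vec cnj w - ?X *\<^sub>v map_vec cnj w) $ i)"
      using a3 by simp
    thus ?thesis using i by (simp add: simps del: index_mult_mat_vec)
  qed
  have h: "?T *\<^sub>v ?u1 - ?cA *\<^sub>v ?u1 = ?T *\<^sub>v ?u2 + ?cB *\<^sub>v ?u2"
  proof (rule eq_vecI)
    fix i assume "i < dim_vec (?T *\<^sub>v ?u2 + ?cB *\<^sub>v ?u2)"
    hence i: "i < 2*d" using carrier_matD[OF A] carrier_matD[OF B] by simp
    show "(?T *\<^sub>v ?u1 - ?cA *\<^sub>v ?u1) $ i = (?T *\<^sub>v ?u2 + ?cB *\<^sub>v ?u2) $ i"
      using lin1[OF c2[OF i]] i A B by (simp del: index_mult_mat_vec)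
  qed (use A B in simp)
  obtain z where z: "z \<in> carrier_vec (2*d)" and
    e1: "?T *\<^sub>v z + ?Y *\<^sub>v z = ?T *\<^sub>v ?u1 + ?cA *\<^sub>v ?u1" and
    e2: "?T *\<^sub>v z - ?Y *\<^sub>v z = ?T *\<^sub>v ?u2 - ?cB *\<^sub>v ?u2"
    using L2[OF conj_carrier[OF B] conj_carrier[OF A] wd2 u2 u1 h] by blast
  have f1: "?T *\<^sub>v w + ?cX *\<^sub>v w = ?T *\<^sub>v z + ?Y *\<^sub>v z"
  proof (rule eq_vecI)
    fix i assume "i < dim_vec (?T *\<^sub>v z + ?Y *\<^sub>v z)"
    hence i: "i < 2*d" using carrier_matD[OF A] carrier_matD[OF B] by simp
    have "(?T *\<^sub>v z + ?Y *\<^sub>v z) $ i = (?T *\<^sub>v ?u1 + ?cA *\<^sub>v ?u1) $ i" using e1 by simp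
    thus "(?T *\<^sub>v w + ?cX *\<^sub>v w) $ i = (?T *\<^sub>v z + ?Y *\<^sub>v z) $ i"
      using lin2[OF c3[OF i]] i A B by (simp del: index_mult_mat_vec)
  qed (use A B in simp)
  have f2: "?T *\<^sub>v w - ?cX *\<^sub>v w = ?T *\<^sub>v z - ?Y *\<^sub>v z"
  proof (rule eq_vecI)
    fix i assume "i < dim_vec (?T *\<^sub>v z - ?Y *\<^sub>v z)"
    hence i: "i < 2*d" using carrier_matD[OF A] carrier_matD[OF B] by simp
    have "(?T *\<^sub>v z - ?Y *\<^sub>v z) $ i = (?T *\<^sub>v ?u2 - ?cB *\<^sub>v ?u2) $ i" using e2 by simp
    thus "(?T *\<^sub>v w - ?cX *\<^sub>v w) $ i = (?T *\<^sub>v z - ?Y *\<^sub>v z) $ i"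
      using lin3[OF c1[OF i]] i A B by (simp del: index_mult_mat_vec)
  qed (use A B in simp)
  show "\<exists>w'. w' \<in> carrier_vec (2*d) \<and> ?T *\<^sub>v w + ?cX *\<^sub>v w = ?T *\<^sub>v w' + ?Y *\<^sub>v w' \<and>
     ?T *\<^sub>v w - ?cX *\<^sub>v w = ?T *\<^sub>v w' - ?Y *\<^sub>v w'"
    using z f1 f2 by blast
qed


lemma sharp_neg: assumes A: "A \<in> carrier_mat (2*d) (2*d)" and B: "B \<in> carrier_mat (2*d) (2*d)"
  and wd1: "sharp_wd d (- A) (- B)" and wd2: "sharp_wd d B A"
  shows "sharp d (- A) (- B) = - sharp d B A"
proof -
  have mA: "- A \<in> carrier_mat (2*d) (2*d)" and mB: "- B \<in> carrier_mat (2*d) (2*d)" using A B by auto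
  let ?T = "theta d" and ?X = "sharp d (- A) (- B)" and ?Y = "sharp d B A"
  have "- ?X = ?Y"
  proof (rule L3[OF uminus_carrier_mat[OF sharp_carrier] sharp_carrier])
    fix w :: "complex vec" assume w: "w \<in> carrier_vec (2*d)"
    obtain w1 w2 where w1: "w1 \<in> carrier_vec (2*d)" and w2: "w2 \<in> carrier_vec (2*d)" and
      a1: "?T *\<^sub>v w + ?X *\<^sub>v w = ?T *\<^sub>v w2 + (- B) *\<^sub>v w2" and
      a2: "?T *\<^sub>v w2 - (- B) *\<^sub>v w2 = ?T *\<^sub>v w1 + (- A) *\<^sub>v w1" and
      a3: "?T *\<^sub>v w1 - (- A) *\<^sub>v w1 = ?T *\<^sub>v w - ?X *\<^sub>v w"
      using L1[OF mA mB wd1 w] by blast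
    note dims = carrier_matD[OF A] carrier_matD[OF B] carrier_vecD[OF w1] carrier_vecD[OF w2] carrier_vecD[OF w]
      negM[OF w1 A] negM[OF w2 B] negM[OF w sharp_carrier]
    have a1i: "(?T *\<^sub>v w) $ i + (?X *\<^sub>v w) $ i = (?T *\<^sub>v w2) $ i - (B *\<^sub>v w2) $ i" if "i < 2*d" for i
      using arg_cong[OF a1, of "\<lambda>v. v $ i"] that dims by (simp del: index_mult_mat_vec)
    have a2i: "(?T *\<^sub>v w2) $ i + (B *\<^sub>v w2) $ i = (?T *\<^sub>v w1) $ i - (A *\<^sub>v w1) $ i" if "i < 2*d" for i
      using arg_cong[OF a2, of "\<lambda>v. v $ i"] that dims by (simp del: index_mult_mat_vec)
    have a3i: "(?T *\<^sub>v w1) $ i + (A *\<^sub>v w1) $ i = (?T *\<^sub>v w) $ i - (?X *\<^sub>v w) $ i" if "i < 2*d" for i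
      using arg_cong[OF a3, of "\<lambda>v. v $ i"] that dims by (simp del: index_mult_mat_vec)
    have h: "?T *\<^sub>v w1 - A *\<^sub>v w1 = ?T *\<^sub>v w2 + B *\<^sub>v w2"
      by (rule eq_vecI) (use dims a2i in \<open>simp_all del: index_mult_mat_vec\<close>)
    obtain z where z: "z \<in> carrier_vec (2*d)" and
      e1: "?T *\<^sub>v z + ?Y *\<^sub>v z = ?T *\<^sub>v w1 + A *\<^sub>v w1" and
      e2: "?T *\<^sub>v z - ?Y *\<^sub>v z = ?T *\<^sub>v w2 - B *\<^sub>v w2"
      using L2[OF B A wd2 w2 w1 h] by blast
    have e1i: "(?T *\<^sub>v z) $ i + (?Y *\<^sub>v z) $ i = (?T *\<^sub>v w1) $ i + (A *\<^sub>v w1) $ i" if "i < 2*d" for i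
      using arg_cong[OF e1, of "\<lambda>v. v $ i"] that dims by (simp del: index_mult_mat_vec)
    have e2i: "(?T *\<^sub>v z) $ i - (?Y *\<^sub>v z) $ i = (?T *\<^sub>v w2) $ i - (B *\<^sub>v w2) $ i" if "i < 2*d" for i
      using arg_cong[OF e2, of "\<lambda>v. v $ i"] that dims by (simp del: index_mult_mat_vec)
    have f1: "?T *\<^sub>v w + (- ?X) *\<^sub>v w = ?T *\<^sub>v z + ?Y *\<^sub>v z"
      by (rule eq_vecI) (use dims e1i a3i in \<open>simp_all del: index_mult_mat_vec\<close>)
    have f2: "?T *\<^sub>v w - (- ?X) *\<^sub>v w = ?T *\<^sub>v z - ?Y *\<^sub>v z"
      by (rule eq_vecI) (use dims e2i a1i in \<open>simp_all del: index_mult_mat_vec\<close>)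
    show "\<exists>w'. w' \<in> carrier_vec (2*d) \<and> ?T *\<^sub>v w + (- ?X) *\<^sub>v w = ?T *\<^sub>v w' + ?Y *\<^sub>v w' \<and>
       ?T *\<^sub>v w - (- ?X) *\<^sub>v w = ?T *\<^sub>v w' - ?Y *\<^sub>v w'"
      using z f1 f2 by blast
  qed
  hence "- (- ?X) = - ?Y" by simp
  thus ?thesis by simp
qed


lemma TA_inj: assumes A: "A \<in> carrier_mat (2*d) (2*d)" and wd: "sharp_wd d A (- A)"
  and v: "v \<in> carrier_vec (2*d)" and hv: "\<And>i. i < 2*d \<Longrightarrow> (theta d *\<^sub>v v) $ i + (A *\<^sub>v v) $ i = 0"
  shows "v = 0\<^sub>v (2*d)"
proof -
  let ?T = "theta d"
  have mA: "- A \<in> carrier_mat (2*d) (2*d)" using A by auto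
  obtain K where K: "the (mat_inverse (Mblock d A (- A))) = K" "K \<in> carrier_mat (2*d+2*d) (2*d+2*d)"
     "Mblock d A (- A) * K = 1\<^sub>m (2*d+2*d)" "K * Mblock d A (- A) = 1\<^sub>m (2*d+2*d)"
    using wd_inverse[OF A mA wd] by blast
  have M: "Mblock d A (- A) \<in> carrier_mat (2*d+2*d) (2*d+2*d)" using A mA by (rule Mblock_carrier)
  have Tv: "?T *\<^sub>v v \<in> carrier_vec (2*d)" by (rule mult_mat_vec_carrier[OF theta_carrier v])
  have Av: "A *\<^sub>v v \<in> carrier_vec (2*d)" by (rule mult_mat_vec_carrier[OF A v])
  define p where "p = ?T *\<^sub>v v"
  define q where "q = - (?T *\<^sub>v v)"
  have p: "p \<in> carrier_vec (2*d)" using Tv unfolding p_def .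
  have q: "q \<in> carrier_vec (2*d)" using Tv unfolding q_def by simp
  have Tp: "?T *\<^sub>v p = v" unfolding p_def by (rule TTv[OF v])
  have Tq: "?T *\<^sub>v q = - v" unfolding q_def by (simp only: Tneg[OF Tv] TTv[OF v])
  have Aeq: "A *\<^sub>v v = - (?T *\<^sub>v v)"
  proof (rule eq_vecI)
    fix i assume "i < dim_vec (- (?T *\<^sub>v v))"
    hence i: "i < 2*d" by simp
    from hv[OF i] show "(A *\<^sub>v v) $ i = (- (?T *\<^sub>v v)) $ i" using i
      by (simp del: index_mult_mat_vec add: eq_neg_iff_add_eq_0 add.commute)
  qed (use A in \<open>simp add: carrier_matD\<close>)
  have TAv: "?T *\<^sub>v (A *\<^sub>v v) = - v" by (simp only: Aeq Tneg[OF Tv] TTv[OF v])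
  have mAmv: "(- A) *\<^sub>v (- v) = A *\<^sub>v v"
  proof -
    have "(- A) *\<^sub>v (- v) = - (A *\<^sub>v (- v))" by (rule uminus_mult_mat_vec) (use A v in \<open>simp add: carrier_matD carrier_vecD\<close>)
    also have "A *\<^sub>v (- v) = - (A *\<^sub>v v)"
      by (rule eq_vecI) (use A v in \<open>simp_all add: carrier_matD carrier_vecD\<close>)
    also have "- (- (A *\<^sub>v v)) = A *\<^sub>v v" by simp
    finally show ?thesis .
  qed
  have "Mblock d A (- A) *\<^sub>v (p @\<^sub>v q) = (?T *\<^sub>v (A *\<^sub>v (?T *\<^sub>v p)) - ?T *\<^sub>v q) @\<^sub>v (?T *\<^sub>v p + ?T *\<^sub>v ((- A) *\<^sub>v (?T *\<^sub>v q)))"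
    by (rule Mblock_mult[OF A mA p q])
  also have "\<dots> = (- v - (- v)) @\<^sub>v (v + - v)" unfolding Tp Tq mAmv TAv ..
  also have "\<dots> = 0\<^sub>v (2*d+2*d)" by (rule eq_vecI) (use v in \<open>simp_all add: carrier_vecD\<close>)
  finally have M0: "Mblock d A (- A) *\<^sub>v (p @\<^sub>v q) = 0\<^sub>v (2*d+2*d)" .
  have pq: "p @\<^sub>v q \<in> carrier_vec (2*d+2*d)" using p q by (rule append_carrier_vec)
  have "p @\<^sub>v q = K *\<^sub>v (Mblock d A (- A) *\<^sub>v (p @\<^sub>v q))"
    using assoc_mult_mat_vec[OF K(2) M pq, symmetric] K(4) one_mult_mat_vec[OF pq] by simp
  also have "\<dots> = 0\<^sub>v (2*d+2*d)" unfolding M0 by (rule eq_vecI) (use K(2) in \<open>simp_all add: carrier_matD\<close>)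
  finally have pq0: "p @\<^sub>v q = 0\<^sub>v (2*d+2*d)" .
  have p0: "p = 0\<^sub>v (2*d)"
  proof (rule eq_vecI)
    fix i assume "i < dim_vec (0\<^sub>v (2*d) :: complex vec)"
    hence i: "i < 2*d" by simp
    have "(p @\<^sub>v q) $ i = 0" unfolding pq0 using i by simp
    thus "p $ i = 0\<^sub>v (2*d) $ i" using i p q by (simp add: carrier_vecD)
  qed (use p in \<open>simp add: carrier_vecD\<close>)
  have "v = ?T *\<^sub>v p" using Tp by simp
  also have "\<dots> = 0\<^sub>v (2*d)" unfolding p0 by (rule eq_vecI) simp_all
  finally show ?thesis .
qed

lemma lin4: fixes a b c e :: complex assumes "a + b = c + e" shows "(a - c) + (b - e) = 0"
  using assms by (simp add: algebra_simps)

lemma lin5: fixes t x p :: complex assumes "t + x = p" "p = t - x" shows "x = 0"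
proof -
  have "2 * x = (t + x) - (t - x)" by simp
  also have "\<dots> = 0" using assms by simp
  finally show ?thesis by simp
qed

lemma zero_mult_vec2: "v \<in> carrier_vec n \<Longrightarrow> 0\<^sub>m m n *\<^sub>v v = 0\<^sub>v m"
  by (rule eq_vecI) auto

lemma sharp_negself: assumes A: "A \<in> carrier_mat (2*d) (2*d)" and wd: "sharp_wd d A (- A)"
  shows "sharp d A (- A) = 0\<^sub>m (2*d) (2*d)"
proof (rule L3[OF sharp_carrier zero_carrier_mat])
  fix w :: "complex vec" assume w: "w \<in> carrier_vec (2*d)"
  let ?T = "theta d" and ?X = "sharp d A (- A)"
  have mA: "- A \<in> carrier_mat (2*d) (2*d)" using A by auto
  obtain w1 w2 where w1: "w1 \<in> carrier_vec (2*d)" and w2: "w2 \<in> carrier_vec (2*d)" and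
    a1: "?T *\<^sub>v w + ?X *\<^sub>v w = ?T *\<^sub>v w2 + (- A) *\<^sub>v w2" and
    a2: "?T *\<^sub>v w2 - (- A) *\<^sub>v w2 = ?T *\<^sub>v w1 + A *\<^sub>v w1" and
    a3: "?T *\<^sub>v w1 - A *\<^sub>v w1 = ?T *\<^sub>v w - ?X *\<^sub>v w"
    using L1[OF A mA wd w] by blast
  note dims = carrier_matD[OF A] carrier_vecD[OF w1] carrier_vecD[OF w2] carrier_vecD[OF w]
      negM[OF w1 A] negM[OF w2 A]
  have a2i: "(?T *\<^sub>v w2) $ i + (A *\<^sub>v w2) $ i = (?T *\<^sub>v w1) $ i + (A *\<^sub>v w1) $ i" if "i < 2*d" for i
    using arg_cong[OF a2, of "\<lambda>v. v $ i"] that dims by (simp del: index_mult_mat_vec)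
  have vc: "w2 - w1 \<in> carrier_vec (2*d)" using w1 w2 by simp
  have "w2 - w1 = 0\<^sub>v (2*d)"
  proof (rule TA_inj[OF A wd vc])
    fix i assume i: "i < 2*d"
    have "?T *\<^sub>v (w2 - w1) = ?T *\<^sub>v w2 - ?T *\<^sub>v w1" by (rule Tminus[OF w2 w1])
    moreover have "A *\<^sub>v (w2 - w1) = A *\<^sub>v w2 - A *\<^sub>v w1" by (rule mult_minus_distrib_mat_vec[OF A w2 w1])
    ultimately show "(?T *\<^sub>v (w2 - w1)) $ i + (A *\<^sub>v (w2 - w1)) $ i = 0"
      using lin4[OF a2i[OF i]] i dims by (simp del: index_mult_mat_vec)
  qed
  hence w21: "w2 = w1"
  proof -
    assume h: "w2 - w1 = 0\<^sub>v (2*d)"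
    show "w2 = w1"
    proof (rule eq_vecI)
      fix i assume "i < dim_vec w1" hence i: "i < 2*d" using dims by simp
      have "(w2 - w1) $ i = 0" unfolding h using i by simp
      thus "w2 $ i = w1 $ i" using i dims by simp
    qed (use dims in simp)
  qed
  have a1i: "(?T *\<^sub>v w) $ i + (?X *\<^sub>v w) $ i = (?T *\<^sub>v w1) $ i - (A *\<^sub>v w1) $ i" if "i < 2*d" for i
    using arg_cong[OF a1, of "\<lambda>v. v $ i"] that dims w21 by (simp del: index_mult_mat_vec)
  have a3i: "(?T *\<^sub>v w1) $ i - (A *\<^sub>v w1) $ i = (?T *\<^sub>v w) $ i - (?X *\<^sub>v w) $ i" if "i < 2*d" for i
    using arg_cong[OF a3, of "\<lambda>v. v $ i"] that dims by (simp del: index_mult_mat_vec)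
  have X0: "(?X *\<^sub>v w) $ i = 0" if i: "i < 2*d" for i
    by (rule lin5[OF a1i[OF i] a3i[OF i]])
  have f1: "?T *\<^sub>v w + ?X *\<^sub>v w = ?T *\<^sub>v w + 0\<^sub>m (2*d) (2*d) *\<^sub>v w"
    by (rule eq_vecI) (use dims X0 w in \<open>simp_all add: zero_mult_vec2[OF w] del: index_mult_mat_vec\<close>)
  have f2: "?T *\<^sub>v w - ?X *\<^sub>v w = ?T *\<^sub>v w - 0\<^sub>m (2*d) (2*d) *\<^sub>v w"
    by (rule eq_vecI) (use dims X0 w in \<open>simp_all add: zero_mult_vec2[OF w] del: index_mult_mat_vec\<close>)
  show "\<exists>w'. w' \<in> carrier_vec (2*d) \<and> ?T *\<^sub>v w + ?X *\<^sub>v w = ?T *\<^sub>v w' + 0\<^sub>m (2*d) (2*d) *\<^sub>v w' \<and>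
     ?T *\<^sub>v w - ?X *\<^sub>v w = ?T *\<^sub>v w' - 0\<^sub>m (2*d) (2*d) *\<^sub>v w'"
    using w f1 f2 by blast
qed


theorem mainTheorem2:
  fixes d :: nat
  assumes "d \<ge> 1"
  shows
    "(\<forall>A B C. sym_mat d A \<and> sym_mat d B \<and> sym_mat d C \<and>
        sharp_wd d A B \<and> sharp_wd d B C \<and>
        sharp_wd d (sharp d A B) C \<and> sharp_wd d A (sharp d B C) \<longrightarrow>
        sharp d (sharp d A B) C = sharp d A (sharp d B C))
   \<and> (\<forall>A. sym_mat d A \<and> sharp_wd d A (0\<^sub>m (2*d) (2*d)) \<longrightarrow>
        sharp d A (0\<^sub>m (2*d) (2*d)) = A)
   \<and> (\<forall>A. sym_mat d A \<and> sharp_wd d (0\<^sub>m (2*d) (2*d)) A \<longrightarrow>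
        sharp d (0\<^sub>m (2*d) (2*d)) A = A)
   \<and> (\<forall>A. sym_mat d A \<and> sharp_wd d A (- A) \<longrightarrow>
        sharp d A (- A) = 0\<^sub>m (2*d) (2*d))
   \<and> (\<forall>A B. sym_mat d A \<and> sym_mat d B \<and> sharp_wd d A B \<and>
        sharp_wd d (conj_mat B) (conj_mat A) \<longrightarrow>
        conj_mat (sharp d A B) = sharp d (conj_mat B) (conj_mat A))
   \<and> (\<forall>A B. sym_mat d A \<and> sym_mat d B \<and> sharp_wd d (- A) (- B) \<and> sharp_wd d B A \<longrightarrow>
        sharp d (- A) (- B) = - sharp d B A)"
proof -
  have c: "\<And>A. sym_mat d A \<Longrightarrow> A \<in> carrier_mat (2*d) (2*d)" unfolding sym_mat_def by blast
  show ?thesis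
  proof (intro conjI allI impI)
    fix A B C assume h: "sym_mat d A \<and> sym_mat d B \<and> sym_mat d C \<and>
        sharp_wd d A B \<and> sharp_wd d B C \<and>
        sharp_wd d (sharp d A B) C \<and> sharp_wd d A (sharp d B C)"
    thus "sharp d (sharp d A B) C = sharp d A (sharp d B C)"
      using sharp_assoc[OF c c c] by blast
  next
    fix A assume h: "sym_mat d A \<and> sharp_wd d A (0\<^sub>m (2*d) (2*d))"
    thus "sharp d A (0\<^sub>m (2*d) (2*d)) = A" using sharp_zero_right[OF c] by blast
  next
    fix A assume h: "sym_mat d A \<and> sharp_wd d (0\<^sub>m (2*d) (2*d)) A"
    thus "sharp d (0\<^sub>m (2*d) (2*d)) A = A" using sharp_zero_left[OF c] by blast
  next
    fix A assume h: "sym_mat d A \<and> sharp_wd d A (- A)"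
    thus "sharp d A (- A) = 0\<^sub>m (2*d) (2*d)" using sharp_negself[OF c] by blast
  next
    fix A B assume h: "sym_mat d A \<and> sym_mat d B \<and> sharp_wd d A B \<and>
        sharp_wd d (conj_mat B) (conj_mat A)"
    thus "conj_mat (sharp d A B) = sharp d (conj_mat B) (conj_mat A)" using sharp_conj[OF c c] by blast
  next
    fix A B assume h: "sym_mat d A \<and> sym_mat d B \<and> sharp_wd d (- A) (- B) \<and> sharp_wd d B A"
    thus "sharp d (- A) (- B) = - sharp d B A" using sharp_neg[OF c c] by blast
  qed
qed

end
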